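(* Let $I\subseteq\mathbb K[x,y]$ be a good ideal. Then $I^k$ is a good ideal for every integer $k\ge1$.
   Context: Let $\mathbb K$ be a field, $R=\mathbb K[x_1,\dots,x_n]$ (here $n=2$), $\mathfrak m=\langle x_1,\dots,x_n\rangle$, $\mathbb N=\{0,1,2,\dots\}$. A monomial $x_1^{\alpha_1}\cdots x_n^{\alpha_n}$ is identified with the point $(\alpha_1,\dots,\alpha_n)\in\mathbb N^n$. For a monomial ideal $I$, $G(I)$ denotes its (unique) minimal monomial generating set. If $I$ is an $\mathfrak m$-primary monomial ideal, then for each $i$ there is a unique $d_i\ge1$ with $x_i^{d_i}\in G(I)$; write $\mu_i=x_i^{d_i}$. For $(a_1,\dots,a_n)\in\mathbb N^n$ the box associated to $I$ is $B_{a_1,\dots,a_n}=([a_1d_1,(a_1+1)d_1]\times\cdots\times[a_nd_n,(a_n+1)d_n])\cap\mathbb N^n$; a monomial belongs to a box if its exponent vector does. An $\mathfrak m$-primary monomial ideal $I$ is called good if for every integer $l\ge1$, every element of $G(I^l)$ belongs to some box $B_{a_1,\dots,a_n}$ with $a_1+\dots+a_n=l-1$; otherwise bad. (Goodness of $I^k$ is defined with respect to its own pure powers $x_i^{kd_i}\in G(I^k)$.) *)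

theory Defs
  imports Main
begin

(* A monomial x^a y^b of K[x,y] is identified with its exponent vector (a,b) in N^2.
   A monomial ideal I of K[x,y] is determined by (and identified with) the set of
   exponent vectors of the monomials it contains; this set is closed under adding
   arbitrary exponent vectors (multiplication by monomials).  The field K plays
   no role in any of the notions below. *)

definition monomial_ideal :: "(nat \<times> nat) set \<Rightarrow> bool" where
  "monomial_ideal I \<longleftrightarrow>
     (\<forall>a b c d. (a, b) \<in> I \<longrightarrow> (a + c, b + d) \<in> I)"

definition m_primary_monomial_ideal :: "(nat \<times> nat) set \<Rightarrow> bool" where
  "m_primary_monomial_ideal I \<longleftrightarrow> monomial_ideal I \<and> (0, 0) \<notin> I \<and>
     (\<exists>d. (d, 0) \<in> I) \<and> (\<exists>e. (0, e) \<in> I)"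

(* minimal monomial generating set G(I): the minimal elements w.r.t. divisibility *)
definition gens :: "(nat \<times> nat) set \<Rightarrow> (nat \<times> nat) set" where
  "gens I = {(a, b) \<in> I. \<forall>c d. (c, d) \<in> I \<longrightarrow> c \<le> a \<longrightarrow> d \<le> b \<longrightarrow> (c, d) = (a, b)}"

fun mpow :: "(nat \<times> nat) set \<Rightarrow> nat \<Rightarrow> (nat \<times> nat) set" where
  "mpow I 0 = UNIV"
| "mpow I (Suc l) = {(c, d). \<exists>a b a' b'. (a, b) \<in> mpow I l \<and> (a', b') \<in> I \<and>
                         a + a' \<le> c \<and> b + b' \<le> d}"

definition d1 :: "(nat \<times> nat) set \<Rightarrow> nat" where
  "d1 I = (LEAST d. (d, 0) \<in> I)"

definition d2 :: "(nat \<times> nat) set \<Rightarrow> nat" where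
  "d2 I = (LEAST e. (0, e) \<in> I)"

definition box :: "(nat \<times> nat) set \<Rightarrow> nat \<Rightarrow> nat \<Rightarrow> (nat \<times> nat) set" where
  "box I a1 a2 = {(p, q). a1 * d1 I \<le> p \<and> p \<le> (a1 + 1) * d1 I \<and>
                         a2 * d2 I \<le> q \<and> q \<le> (a2 + 1) * d2 I}"

definition good :: "(nat \<times> nat) set \<Rightarrow> bool" where
  "good I \<longleftrightarrow> (\<forall>l::nat. l \<ge> 1 \<longrightarrow>
      (\<forall>g \<in> gens (mpow I l). \<exists>a1 a2. a1 + a2 = l - 1 \<and> g \<in> box I a1 a2))"

end

theory Submission
  imports Defs
begin

definition mprod :: "(nat \<times> nat) set \<Rightarrow> (nat \<times> nat) set \<Rightarrow> (nat \<times> nat) set" where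
  "mprod P Q = {(c, d). \<exists>a b a' b'. (a, b) \<in> P \<and> (a', b') \<in> Q \<and> a + a' \<le> c \<and> b + b' \<le> d}"

lemma mpow_Suc': "mpow I (Suc l) = mprod (mpow I l) I"
  by (simp add: mprod_def)

lemma mprod_assoc: "mprod (mprod P Q) R = mprod P (mprod Q R)"
  unfolding mprod_def
  by (auto; force)

definition upc :: "(nat \<times> nat) set \<Rightarrow> bool" where
  "upc P \<longleftrightarrow> (\<forall>a b c d. (a, b) \<in> P \<longrightarrow> a \<le> c \<longrightarrow> b \<le> d \<longrightarrow> (c, d) \<in> P)"

lemma mprod_UNIV: "upc P \<Longrightarrow> mprod P UNIV = P"
  unfolding mprod_def upc_def
proof (intro equalityI subsetI)
  fix x assume "x \<in> {(c, d). \<exists>a b a' b'. (a, b) \<in> P \<and> (a', b') \<in> UNIV \<and> a + a' \<le> c \<and> b + b' \<le> d}"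
    and u: "\<forall>a b c d. (a, b) \<in> P \<longrightarrow> a \<le> c \<longrightarrow> b \<le> d \<longrightarrow> (c, d) \<in> P"
  then obtain c d a b a' b' where "x = (c, d)" "(a, b) \<in> P" "a + a' \<le> c" "b + b' \<le> d" by auto
  then show "x \<in> P" using u[rule_format, of a b c d] by simp
next
  fix x assume "x \<in> P"
  then show "x \<in> {(c, d). \<exists>a b a' b'. (a, b) \<in> P \<and> (a', b') \<in> UNIV \<and> a + a' \<le> c \<and> b + b' \<le> d}"
    by (cases x) fastforce
qed

lemma upc_mpow: "upc (mpow I l)"
proof (cases l)
  case 0 thus ?thesis by (simp add: upc_def)
next
  case (Suc m)
  show ?thesis unfolding upc_def Suc mpow.simps
  proof (intro allI impI)
    fix a b c d assume "(a, b) \<in> {(c, d). \<exists>a b a' b'. (a, b) \<in> mpow I m \<and> (a', b') \<in> I \<and> a + a' \<le> c \<and> b + b' \<le> d}"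
      "a \<le> c" "b \<le> d"
    then show "(c, d) \<in> {(c, d). \<exists>a b a' b'. (a, b) \<in> mpow I m \<and> (a', b') \<in> I \<and> a + a' \<le> c \<and> b + b' \<le> d}"
      by (fastforce intro: le_trans)
  qed
qed

lemma mpow_add: "mpow I (m + n) = mprod (mpow I m) (mpow I n)"
proof (induction n)
  case 0
  then show ?case using mprod_UNIV[OF upc_mpow] by simp
next
  case (Suc n)
  then show ?case by (simp only: add_Suc_right mpow_Suc' mprod_assoc)
qed

lemma mpow_mpow: "mpow (mpow I k) l = mpow I (k * l)"
proof (induction l)
  case 0
  then show ?case by simp
next
  case (Suc l)
  have "mpow I (k * Suc l) = mprod (mpow I (k*l)) (mpow I k)" using mpow_add[of I "k*l" k] by (simp add: add.commute)
  with Suc show ?case by (simp only: mpow_Suc')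
qed

lemma d1_props:
  assumes "m_primary_monomial_ideal I"
  shows "(d1 I, 0) \<in> I" "\<And>d. (d, 0) \<in> I \<Longrightarrow> d1 I \<le> d"
  using assms unfolding m_primary_monomial_ideal_def d1_def
  by (auto intro: LeastI_ex Least_le)

lemma d2_props:
  assumes "m_primary_monomial_ideal I"
  shows "(0, d2 I) \<in> I" "\<And>d. (0, d) \<in> I \<Longrightarrow> d2 I \<le> d"
  using assms unfolding m_primary_monomial_ideal_def d2_def
  by (auto intro: LeastI_ex Least_le)

lemma d1_pow_mem: "m_primary_monomial_ideal I \<Longrightarrow> (n * d1 I, 0) \<in> mpow I n"
proof (induction n)
  case 0 thus ?case by simp
next
  case (Suc n)
  thus ?case using d1_props(1)[OF Suc.prems] by fastforce
qed

lemma d1_pow_min: "m_primary_monomial_ideal I \<Longrightarrow> (d, 0) \<in> mpow I n \<Longrightarrow> n * d1 I \<le> d"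
proof (induction n arbitrary: d)
  case 0 thus ?case by simp
next
  case (Suc n)
  from Suc.prems(2) obtain a a' where "(a, 0) \<in> mpow I n" "(a', 0) \<in> I" "a + a' \<le> d"
    by auto
  with Suc.IH[OF Suc.prems(1)] d1_props(2)[OF Suc.prems(1)] show ?case by fastforce
qed

lemma d2_pow_mem: "m_primary_monomial_ideal I \<Longrightarrow> (0, n * d2 I) \<in> mpow I n"
proof (induction n)
  case 0 thus ?case by simp
next
  case (Suc n)
  thus ?case using d2_props(1)[OF Suc.prems] by fastforce
qed

lemma d2_pow_min: "m_primary_monomial_ideal I \<Longrightarrow> (0, d) \<in> mpow I n \<Longrightarrow> n * d2 I \<le> d"
proof (induction n arbitrary: d)
  case 0 thus ?case by simp
next
  case (Suc n)
  from Suc.prems(2) obtain b b' where "(0, b) \<in> mpow I n" "(0, b') \<in> I" "b + b' \<le> d"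
    by auto
  with Suc.IH[OF Suc.prems(1)] d2_props(2)[OF Suc.prems(1)] show ?case by fastforce
qed

lemma d1_mpow: "m_primary_monomial_ideal I \<Longrightarrow> d1 (mpow I k) = k * d1 I"
  unfolding d1_def
  by (rule Least_equality) (auto intro: d1_pow_mem[unfolded d1_def] d1_pow_min[unfolded d1_def])

lemma d2_mpow: "m_primary_monomial_ideal I \<Longrightarrow> d2 (mpow I k) = k * d2 I"
  unfolding d2_def
  by (rule Least_equality) (auto intro: d2_pow_mem[unfolded d2_def] d2_pow_min[unfolded d2_def])

lemma arith_div:
  fixes a1 a2 k l :: nat
  assumes "k \<ge> 1" "l \<ge> 1" "a1 + a2 = k * l - 1"
  shows "a1 div k + a2 div k = l - 1"
proof -
  define b1 r1 b2 r2 where "b1 = a1 div k" "r1 = a1 mod k" "b2 = a2 div k" "r2 = a2 mod k"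
  have e1: "a1 = k * b1 + r1" "a2 = k * b2 + r2" by (simp_all add: b1_r1_b2_r2_def)
  have r: "r1 < k" "r2 < k" using assms(1) by (simp_all add: b1_r1_b2_r2_def)
  have eq: "k * (b1 + b2) + r1 + r2 + 1 = k * l"
  proof -
    have "k * l \<ge> 1" using assms(1,2) by simp
    thus ?thesis using assms(3) e1 by (simp add: algebra_simps)
  qed
  have "k * (b1 + b2) < k * l" using eq by linarith
  hence lt: "b1 + b2 < l" by simp
  have "k * l < k * (b1 + b2 + 2)" using eq r by (simp add: algebra_simps)
  hence "l < b1 + b2 + 2" using mult_less_cancel1 by blast
  with lt show ?thesis by (simp add: b1_r1_b2_r2_def)
qed

theorem mainTheorem13:
  fixes I :: "(nat \<times> nat) set" and k :: nat
  assumes "m_primary_monomial_ideal I"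
    and "good I"
    and "k \<ge> 1"
  shows "good (mpow I k)"
  unfolding good_def
proof (intro allI impI ballI)
  fix l :: nat and g
  assume l: "l \<ge> 1" and g: "g \<in> gens (mpow (mpow I k) l)"
  have "k * l \<ge> 1" using l assms(3) by simp
  moreover have "g \<in> gens (mpow I (k * l))" using g by (simp add: mpow_mpow)
  ultimately obtain a1 a2 where a: "a1 + a2 = k * l - 1" "g \<in> box I a1 a2"
    using assms(2) unfolding good_def by blast
  obtain p q where pq: "g = (p, q)" by fastforce
  define b1 b2 where "b1 = a1 div k" "b2 = a2 div k"
  have sum: "b1 + b2 = l - 1" using arith_div[OF assms(3) l a(1)] by (simp add: b1_b2_def)
  have km: "a1 mod k < k" "a2 mod k < k" using assms(3) by simp_all
  have kd: "a1 = k * b1 + a1 mod k" "a2 = k * b2 + a2 mod k" by (simp_all add: b1_b2_def)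
  have m1: "k * b1 \<le> a1" "a1 + 1 \<le> k * b1 + k" "k * b2 \<le> a2" "a2 + 1 \<le> k * b2 + k"
    using km kd by linarith+
  have "g \<in> box (mpow I k) b1 b2"
  proof -
    have hp: "a1 * d1 I \<le> p" "p \<le> (a1 + 1) * d1 I" "a2 * d2 I \<le> q" "q \<le> (a2 + 1) * d2 I"
      using a(2) pq by (auto simp: box_def)
    have "b1 * (k * d1 I) = (k * b1) * d1 I" by simp
    also have "... \<le> a1 * d1 I" using m1(1) by (rule mult_le_mono1)
    finally have 1: "b1 * (k * d1 I) \<le> p" using hp(1) by linarith
    have "(a1 + 1) * d1 I \<le> (k * b1 + k) * d1 I" using m1(2) by (rule mult_le_mono1)
    also have "... = (b1 + 1) * (k * d1 I)" by (simp add: algebra_simps)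
    finally have 2: "p \<le> (b1 + 1) * (k * d1 I)" using hp(2) by linarith
    have "b2 * (k * d2 I) = (k * b2) * d2 I" by simp
    also have "... \<le> a2 * d2 I" using m1(3) by (rule mult_le_mono1)
    finally have 3: "b2 * (k * d2 I) \<le> q" using hp(3) by linarith
    have "(a2 + 1) * d2 I \<le> (k * b2 + k) * d2 I" using m1(4) by (rule mult_le_mono1)
    also have "... = (b2 + 1) * (k * d2 I)" by (simp add: algebra_simps)
    finally have 4: "q \<le> (b2 + 1) * (k * d2 I)" using hp(4) by linarith
    from 1 2 3 4 show ?thesis using pq
      by (simp add: box_def d1_mpow[OF assms(1)] d2_mpow[OF assms(1)])
  qed
  with sum show "\<exists>a1 a2. a1 + a2 = l - 1 \<and> g \<in> box (mpow I k) a1 a2" by blast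
qed

end
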